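(* Let $0\le\lambda<\gamma\le\delta$. If $F\in\mathcal{R}(\gamma,\delta,\lambda)$, then $\mathrm{Re}\{F'(z)\}>0$ for all $z\in\mathcal{U}$, and hence $F$ is close-to-convex in $\mathcal{U}$.
   Context: Let $\mathcal{U}=\{z\in\mathbb{C}:|z|<1\}$ and let $\mathcal{A}$ be the class of analytic functions $F$ in $\mathcal{U}$ with $F(0)=0$, $F'(0)=1$. For real $0\le\lambda<\gamma\le\delta$, $\mathcal{R}(\gamma,\delta,\lambda)$ is the class of $F\in\mathcal{A}$ such that $\mathrm{Re}\{\gamma F'(z)+\delta zF''(z)+\frac{\delta-\gamma}{2}z^2F'''(z)\}>\lambda$ for all $z\in\mathcal{U}$. A function is close-to-convex in $\mathcal{U}$ if it is univalent there and maps $\mathcal{U}$ onto a close-to-convex domain, i.e. a simply connected domain whose complement in $\mathbb{C}$ is a union of non-crossing half-lines. *)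

theory Defs
  imports "HOL-Complex_Analysis.Complex_Analysis"
begin

definition class_A :: "(complex \<Rightarrow> complex) \<Rightarrow> bool" where
  "class_A F \<longleftrightarrow> F holomorphic_on ball 0 1 \<and> F 0 = 0 \<and> deriv F 0 = 1"

definition class_R :: "real \<Rightarrow> real \<Rightarrow> real \<Rightarrow> (complex \<Rightarrow> complex) \<Rightarrow> bool" where
  "class_R gam del lam F \<longleftrightarrow> class_A F \<and>
     (\<forall>z\<in>ball 0 1. Re (of_real gam * deriv F z + of_real del * z * (deriv ^^ 2) F z
        + of_real ((del - gam) / 2) * z\<^sup>2 * (deriv ^^ 3) F z) > lam)"

definition half_line :: "complex set \<Rightarrow> bool" where
  "half_line h \<longleftrightarrow> (\<exists>a v. v \<noteq> 0 \<and> h = {a + of_real t * v | t. t \<ge> 0})"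

definition half_line_origin :: "complex set \<Rightarrow> complex" where
  "half_line_origin h = (SOME a. \<exists>v. v \<noteq> 0 \<and> h = {a + of_real t * v | t. t \<ge> 0})"

definition non_crossing :: "complex set \<Rightarrow> complex set \<Rightarrow> bool" where
  "non_crossing h1 h2 \<longleftrightarrow> h1 \<subseteq> h2 \<or> h2 \<subseteq> h1 \<or>
     h1 \<inter> h2 \<subseteq> {half_line_origin h1, half_line_origin h2}"

definition close_to_convex_domain :: "complex set \<Rightarrow> bool" where
  "close_to_convex_domain D \<longleftrightarrow> open D \<and> connected D \<and> simply_connected D \<and>
     (\<exists>H. (\<forall>h\<in>H. half_line h) \<and> (- D = \<Union>H) \<and>
          (\<forall>h1\<in>H. \<forall>h2\<in>H. h1 \<noteq> h2 \<longrightarrow> non_crossing h1 h2))"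

definition close_to_convex :: "(complex \<Rightarrow> complex) \<Rightarrow> bool" where
  "close_to_convex F \<longleftrightarrow> inj_on F (ball 0 1) \<and> close_to_convex_domain (F ` ball 0 1)"

end

theory Submission
  imports Defs "HOL-Analysis.Analysis"
begin


lemma seg_real:
  fixes a b :: real
  assumes "u \<in> closed_segment (complex_of_real a) (complex_of_real b)" "a \<le> b"
  shows "\<exists>r. u = of_real r \<and> a \<le> r \<and> r \<le> b"
proof -
  from assms obtain t where t: "0 \<le> t" "t \<le> 1" "u = (1 - t) *\<^sub>R complex_of_real a + t *\<^sub>R complex_of_real b"
    unfolding closed_segment_def by auto
  have "u = of_real ((1-t)*a + t*b)" using t by (simp add: scaleR_conv_of_real)
  moreover have "t*(b-a) \<ge> 0" "(1-t)*(b-a) \<ge> 0" using t assms(2) by auto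
  then have "a \<le> (1-t)*a + t*b" "(1-t)*a + t*b \<le> b"
    by (auto simp: algebra_simps)
  ultimately show ?thesis by blast
qed

lemma Re_ofr: "Re (complex_of_real c * z) = c * Re z" by simp
lemma Re_ofr2': "Re (z * complex_of_real c) = Re z * c" by simp

lemma part1:
  fixes gam del lam :: real and F :: "complex \<Rightarrow> complex"
  assumes "0 \<le> lam" "lam < gam" "gam \<le> del"
    and "class_R gam del lam F"
  shows "\<forall>z\<in>ball 0 1. Re (deriv F z) > 0"
proof -
  define U where "U = ball (0::complex) 1"
  define p where "p = deriv F"
  define p2 where "p2 = deriv p"
  define p3 where "p3 = deriv p2"
  define mu where "mu = (del - gam) / 2"
  have holF: "F holomorphic_on U" and p0: "p 0 = 1"
    using assms(4) unfolding class_R_def class_A_def U_def p_def by auto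
  have hyp: "\<And>z. z \<in> U \<Longrightarrow> Re (of_real gam * p z + of_real del * z * p2 z + of_real mu * z\<^sup>2 * p3 z) > lam"
    using assms(4) unfolding class_R_def U_def p_def p2_def p3_def mu_def
    by (simp add: numeral_3_eq_3 numeral_2_eq_2)
  have oU: "open U" unfolding U_def by simp
  have holp: "p holomorphic_on U" unfolding p_def using holF oU by (rule holomorphic_deriv)
  have holp2: "p2 holomorphic_on U" unfolding p2_def using holp oU by (rule holomorphic_deriv)
  have dp: "\<And>w. w \<in> U \<Longrightarrow> (p has_field_derivative p2 w) (at w)"
    unfolding p2_def using holp oU by (blast intro: holomorphic_derivI)
  have dp2: "\<And>w. w \<in> U \<Longrightarrow> (p2 has_field_derivative p3 w) (at w)"
    unfolding p3_def using holp2 oU by (blast intro: holomorphic_derivI)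
  define G where "G = (\<lambda>w. p w + w * p2 w)"
  define G' where "G' = (\<lambda>w. 2 * p2 w + w * p3 w)"
  have dG: "\<And>w. w \<in> U \<Longrightarrow> (G has_field_derivative G' w) (at w)"
    unfolding G_def G'_def
    by (rule derivative_eq_intros dp dp2 | assumption | simp add: algebra_simps)+
  have QG: "of_real gam * p z + of_real del * z * p2 z + of_real mu * z\<^sup>2 * p3 z
        = of_real gam * G z + of_real mu * z * G' z" for z
    unfolding G_def G'_def mu_def by (simp add: field_simps power2_eq_square)
  have Q: "\<And>z. z \<in> U \<Longrightarrow> Re (of_real gam * G z + of_real mu * z * G' z) > lam"
    using hyp QG by metis
  have gpos: "gam > 0" "mu \<ge> 0" using assms unfolding mu_def by auto
  have stepA: "Re (G w) > 0" if w: "w \<in> U" for w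
  proof (cases "mu = 0")
    case True
    then have "Re (of_real gam * G w) > 0" using Q[OF w] assms(1) by simp
    then show ?thesis using gpos by (simp add: zero_less_mult_iff)
  next
    case False
    with gpos have mu: "mu > 0" by simp
    define a where "a = gam / mu"
    have a: "a > 0" unfolding a_def using mu gpos by simp
    have contG: "continuous (at 0) G"
      using dG[of 0] unfolding U_def by (simp add: DERIV_continuous)
    have "G 0 = 1" unfolding G_def using p0 by simp
    then have "isCont (\<lambda>w. Re (G w)) 0" "Re (G 0) > 0"
      using contG by (auto intro: continuous_intros)
    then obtain d where d: "d > 0" "\<And>v. dist v 0 < d \<Longrightarrow> Re (G v) > 0"
    proof -
      from \<open>isCont (\<lambda>w. Re (G w)) 0\<close> obtain d where "d > 0"
        "\<And>v. dist v 0 < d \<Longrightarrow> dist (Re (G v)) (Re (G 0)) < Re (G 0)"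
        unfolding continuous_at_eps_delta using \<open>Re (G 0) > 0\<close> by metis
      then show ?thesis using that by (force simp: dist_real_def)
    qed
    show ?thesis
    proof (cases "cmod w < d")
      case True then show ?thesis using d by simp
    next
      case False
      have wU: "cmod w < 1" using w unfolding U_def by simp
      have w0: "w \<noteq> 0" using False d by auto
      have inU': "of_real r * w \<in> U" if "0 \<le> r" "r \<le> 1" for r
      proof -
        have "cmod (of_real r * w) = r * cmod w" using that by (simp add: norm_mult)
        also have "\<dots> \<le> cmod w" using that by (simp add: mult_left_le_one_le)
        finally show ?thesis using wU unfolding U_def by simp
      qed
      define e where "e = d / (2 * cmod w)"
      have e: "0 < e" "e < 1" "e * cmod w < d"
        using False d w0 wU unfolding e_def by (auto simp: field_simps)
      define Psi where "Psi = (\<lambda>t. t powr (of_real a) * G (t * w))"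
      define Psi' where "Psi' = (\<lambda>t. of_real a * t powr (of_real a - 1) * G (t * w) + t powr (of_real a) * (G' (t * w) * w))"
      have seg: "\<And>u. u \<in> closed_segment (complex_of_real e) (complex_of_real 1) \<Longrightarrow> \<exists>r. u = of_real r \<and> e \<le> r \<and> r \<le> 1"
        using seg_real[of _ e 1] e by auto
      have dPsi: "(Psi has_field_derivative Psi' u) (at u)" if u: "u \<in> closed_segment (complex_of_real e) (complex_of_real 1)" for u
      proof -
        obtain r where r: "u = of_real r" "e \<le> r" "r \<le> 1" using seg[OF u] by blast
        have uU: "u * w \<in> U" using inU' r e by simp
        have nr: "u \<notin> \<real>\<^sub>\<le>\<^sub>0" using r e by (auto simp: nonpos_Reals_def)
        have "((\<lambda>t. G (t * w)) has_field_derivative G' (u * w) * w) (at u)"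
          by (rule DERIV_chain2[where g="\<lambda>t. t * w", OF dG[OF uU]]) (rule derivative_eq_intros | simp)+
        from DERIV_mult[OF has_field_derivative_powr[OF nr, of "of_real a"] this]
        have "(Psi has_field_derivative (of_real a * u powr (of_real a - 1)) * G (u * w) + G' (u * w) * w * u powr (of_real a)) (at u)"
          unfolding Psi_def .
        moreover have "(of_real a * u powr (of_real a - 1)) * G (u * w) + G' (u * w) * w * u powr (of_real a) = Psi' u"
          unfolding Psi'_def by (simp only: mult.commute mult.left_commute mult.assoc)
        ultimately show ?thesis by simp
      qed
      obtain u where u: "u \<in> closed_segment (complex_of_real e) (complex_of_real 1)"
        and mvt: "Re (Psi (of_real 1)) - Re (Psi (of_real e)) = Re (Psi' u * (of_real 1 - of_real e))"
        using complex_mvt_line[OF dPsi] by blast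
      obtain r where r: "u = of_real r" "e \<le> r" "r \<le> 1" using seg[OF u] by blast
      have r0: "r > 0" using r e by simp
      have ruU: "of_real r * w \<in> U" using inU' r e by simp
      have pw1: "(complex_of_real r) powr (of_real a - 1) = of_real (r powr (a - 1))"
        using powr_of_real[of r "a - 1"] r0 by simp
      have pw2: "(complex_of_real r) powr (of_real a) = of_real (r powr (a - 1) * r)"
      proof -
        have rr: "r powr (a - 1) * r = r powr a" using r0 by (simp add: powr_diff)
        show ?thesis using powr_of_real[of r a] r0 by (simp add: rr flip: of_real_mult)
      qed
      have "Psi' u = of_real (r powr (a - 1) / mu) * (of_real gam * G (of_real r * w) + of_real mu * (of_real r * w) * G' (of_real r * w))"
      proof -
        have alg: "of_real a * of_real c * X + of_real (c*r) * (Y*w) = of_real (c/mu) * (of_real gam * X + of_real mu * (of_real r * w) * Y)" for c X Y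
          unfolding a_def using mu by (simp add: field_simps)
        show ?thesis unfolding Psi'_def r(1) pw1 pw2 by (simp only: alg mult.commute[of w "complex_of_real r"])
      qed
      then have "Re (Psi' u * (of_real 1 - of_real e)) = r powr (a - 1) / mu * (1 - e) * Re (of_real gam * G (of_real r * w) + of_real mu * (of_real r * w) * G' (of_real r * w))"
        by (simp add: Re_ofr Re_ofr2' mult.commute[of _ "complex_of_real (1-e)"] flip: of_real_diff)
      moreover have "Re (of_real gam * G (of_real r * w) + of_real mu * (of_real r * w) * G' (of_real r * w)) > 0"
        using Q[OF ruU] assms(1) by simp
      ultimately have pos1: "Re (Psi' u * (of_real 1 - of_real e)) > 0"
        using r0 mu e by (simp add: zero_less_mult_iff)
      have "Psi (of_real 1) = G w" unfolding Psi_def using powr_of_real[of 1 a] by simp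
      moreover have "Psi (of_real e) = of_real (e powr a) * G (of_real e * w)"
        unfolding Psi_def using powr_of_real[of e a] e by simp
      moreover have "Re (G (of_real e * w)) > 0" using d(2)[of "of_real e * w"] e by (simp add: norm_mult)
      ultimately have "Re (Psi (of_real e)) > 0" "Re (Psi (of_real 1)) = Re (G w)"
        using e by (auto simp: Re_ofr Re_ofr2')
      then show ?thesis using mvt pos1 by linarith
    qed
  qed
  show ?thesis
  proof
    fix z :: complex assume z: "z \<in> ball 0 1"
    define Phi where "Phi = (\<lambda>t. t * p (t * z))"
    have seg: "\<And>u. u \<in> closed_segment (complex_of_real 0) (complex_of_real 1) \<Longrightarrow> \<exists>r. u = of_real r \<and> 0 \<le> r \<and> r \<le> 1"
      using seg_real[of _ 0 1] by auto
    have inU: "of_real r * z \<in> U" if "0 \<le> r" "r \<le> 1" for r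
    proof -
      have "cmod (of_real r * z) = r * cmod z" using that by (simp add: norm_mult)
      also have "\<dots> \<le> cmod z" using that by (simp add: mult_left_le_one_le)
      finally show ?thesis using z unfolding U_def by simp
    qed
    have dPhi: "(Phi has_field_derivative G (u * z)) (at u)" if u: "u \<in> closed_segment (complex_of_real 0) (complex_of_real 1)" for u
    proof -
      obtain r where r: "u = of_real r" "0 \<le> r" "r \<le> 1" using seg[OF u] by blast
      have uU: "u * z \<in> U" using inU r by simp
      have "((\<lambda>t. p (t * z)) has_field_derivative p2 (u * z) * z) (at u)"
        by (rule DERIV_chain2[where g="\<lambda>t. t * z", OF dp[OF uU]]) (rule derivative_eq_intros | simp)+
      from DERIV_mult[OF DERIV_ident this]
      have "(Phi has_field_derivative 1 * p (u * z) + p2 (u * z) * z * u) (at u)" unfolding Phi_def .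
      moreover have "1 * p (u * z) + p2 (u * z) * z * u = G (u * z)" unfolding G_def by (simp add: algebra_simps)
      ultimately show ?thesis by simp
    qed
    obtain u where u: "u \<in> closed_segment (complex_of_real 0) (complex_of_real 1)"
      and mvt: "Re (Phi (of_real 1)) - Re (Phi (of_real 0)) = Re (G (u * z) * (of_real 1 - of_real 0))"
      using complex_mvt_line[OF dPhi] by blast
    obtain r where r: "u = of_real r" "0 \<le> r" "r \<le> 1" using seg[OF u] by blast
    have "Re (G (u * z)) > 0" using stepA inU r by simp
    then show "Re (deriv F z) > 0" using mvt unfolding Phi_def p_def by simp
  qed
qed



lemma inner_cnj: "inner (x::complex) y = Re (x * cnj y)"
  by (simp add: inner_complex_def)

lemma Re_ofr2: "Re (z * complex_of_real c) = Re z * c" by simp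

definition Sset :: "(complex \<Rightarrow> complex) \<Rightarrow> complex \<Rightarrow> complex set" where
  "Sset F \<zeta> = {v. \<forall>z\<in>ball 0 1. inner (v - F z) (\<zeta> - z) \<ge> 0}"

context
  fixes F :: "complex \<Rightarrow> complex"
  assumes holF: "F holomorphic_on ball 0 1"
    and posF: "\<forall>z\<in>ball 0 1. Re (deriv F z) > 0"
begin

lemma contF: "continuous_on (ball 0 1) F"
  using holF by (rule holomorphic_on_imp_continuous_on)

lemma mono_strict:
  assumes a: "a \<in> ball 0 1" and b: "b \<in> ball 0 1" and ab: "a \<noteq> b"
  shows "inner (F a - F b) (a - b) > 0"
proof -
  define f where "f = (\<lambda>u. F u * cnj (a - b))"
  have "closed_segment b a \<subseteq> ball 0 1"
    using a b by (simp add: closed_segment_subset)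
  then have d: "(f has_field_derivative deriv F u * cnj (a - b)) (at u)" if "u \<in> closed_segment b a" for u
    unfolding f_def using that holF
    by (intro DERIV_cmult_right holomorphic_derivI[of F "ball 0 1"]) auto
  obtain u where u: "u \<in> closed_segment b a"
    and mvt: "Re (f a) - Re (f b) = Re (deriv F u * cnj (a - b) * (a - b))"
    using complex_mvt_line[OF d] by blast
  have uU: "u \<in> ball 0 1" using u a b by (meson \<open>closed_segment b a \<subseteq> ball 0 1\<close> subsetD)
  have "deriv F u * cnj (a - b) * (a - b) = deriv F u * of_real ((cmod (a - b))\<^sup>2)"
  proof -
    have "cnj (a - b) * (a - b) = of_real ((cmod (a - b))\<^sup>2)"
      by (metis complex_norm_square mult.commute)
    then show ?thesis by (simp only: mult.assoc)
  qed
  then have "Re (deriv F u * cnj (a - b) * (a - b)) = Re (deriv F u) * (cmod (a - b))\<^sup>2"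
    by (simp only: Re_ofr2)
  moreover have "Re (deriv F u) > 0" using posF uU by blast
  moreover have "(cmod (a - b))\<^sup>2 > 0" using ab by simp
  ultimately have "Re (f a) - Re (f b) > 0" using mvt by simp
  moreover have "inner (F a - F b) (a - b) = Re (f a) - Re (f b)"
    unfolding f_def inner_cnj by (simp add: algebra_simps)
  ultimately show ?thesis by simp
qed

lemma mono_weak:
  assumes "a \<in> ball 0 1" "b \<in> ball 0 1"
  shows "inner (F a - F b) (a - b) \<ge> 0"
  using mono_strict[OF assms] by (cases "a = b") auto

lemma L:
  assumes z0: "z0 \<in> ball 0 1" and H: "\<forall>z\<in>ball 0 1. inner (x - F z) (z0 - z) \<ge> 0"
  shows "x = F z0"
proof (rule ccontr)
  assume "x \<noteq> F z0"
  define d where "d = x - F z0"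
  define nd where "nd = norm d"
  have nd: "nd > 0" using \<open>x \<noteq> F z0\<close> unfolding nd_def d_def by simp
  obtain del where del: "del > 0" "\<And>z. z \<in> ball 0 1 \<Longrightarrow> dist z z0 < del \<Longrightarrow> dist (F z) (F z0) < nd / 2"
    using contF z0 nd unfolding continuous_on_iff by (metis half_gt_zero)
  obtain rho where rho: "rho > 0" "ball z0 rho \<subseteq> ball 0 1"
    using z0 by (meson openE open_ball)
  define e where "e = min del rho / (2 * nd)"
  have e: "e > 0" unfolding e_def using del rho nd by simp
  define z where "z = z0 + e *\<^sub>R d"
  have dz: "dist z z0 = min del rho / 2" unfolding z_def e_def nd_def using nd del rho
    by (simp add: dist_norm nd_def)
  then have "z \<in> ball z0 rho" using rho del by (simp add: dist_commute)
  then have zU: "z \<in> ball 0 1" using rho by blast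
  have close: "dist (F z) (F z0) < nd / 2" using del(2)[OF zU] dz del rho by simp
  have "inner (x - F z) (z0 - z) \<ge> 0" using H zU by blast
  moreover have "z0 - z = - (e *\<^sub>R d)" unfolding z_def by simp
  ultimately have "- e * inner (x - F z) d \<ge> 0" by simp
  then have le: "inner (x - F z) d \<le> 0" using e by (simp add: mult_le_0_iff)
  have "x - F z = d + (F z0 - F z)" unfolding d_def by simp
  then have "inner (x - F z) d = inner d d + inner (F z0 - F z) d" by (simp only: inner_add_left)
  then have eq: "inner (x - F z) d = nd\<^sup>2 + inner (F z0 - F z) d"
    unfolding nd_def by (simp add: power2_norm_eq_inner)
  have "\<bar>inner (F z0 - F z) d\<bar> \<le> norm (F z0 - F z) * nd"
    unfolding nd_def by (rule Cauchy_Schwarz_ineq2)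
  moreover have "norm (F z0 - F z) < nd / 2" using close by (simp add: dist_norm norm_minus_commute)
  moreover have "norm (F z0 - F z) * nd < (nd / 2) * nd"
    using \<open>norm (F z0 - F z) < nd / 2\<close> nd by (rule mult_strict_right_mono)
  ultimately have "inner (F z0 - F z) d > - ((nd/2) * nd)" by linarith
  moreover have "(nd/2) * nd = nd\<^sup>2 / 2" by (simp add: power2_eq_square)
  moreover have "nd\<^sup>2 > 0" using nd by simp
  ultimately show False using le eq by linarith
qed

lemma Sb:
  assumes "cmod \<zeta> = 1" "v \<in> Sset F \<zeta>" "z' \<in> ball 0 1"
  shows "v \<noteq> F z'"
proof
  assume v: "v = F z'"
  define z'' where "z'' = z' + (1/2) *\<^sub>R (\<zeta> - z')"
  have nz: "cmod z' < 1" using assms(3) by simp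
  have "z'' = (1/2) *\<^sub>R z' + (1/2) *\<^sub>R \<zeta>" unfolding z''_def by (simp add: scaleR_conv_of_real field_simps)
  then have "cmod z'' \<le> (1/2) * cmod z' + (1/2) * cmod \<zeta>"
    by (metis norm_scaleR norm_triangle_ineq abs_of_pos half_gt_zero zero_less_one)
  then have z''U: "z'' \<in> ball 0 1" using nz assms(1) by simp
  have ne: "\<zeta> - z' \<noteq> 0" using assms(1) nz by auto
  have "z'' \<noteq> z'" using ne unfolding z''_def by simp
  then have "inner (F z'' - F z') (z'' - z') > 0" using mono_strict z''U assms(3) by blast
  then have A: "inner (F z'' - F z') (\<zeta> - z') > 0" unfolding z''_def by simp
  have "inner (v - F z'') (\<zeta> - z'') \<ge> 0" using assms(2) z''U unfolding Sset_def by blast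
  moreover have "\<zeta> - z'' = (1/2) *\<^sub>R (\<zeta> - z')" unfolding z''_def by (simp add: scaleR_conv_of_real field_simps)
  ultimately have "inner (F z' - F z'') (\<zeta> - z') \<ge> 0" using v by simp
  moreover have "inner (F z' - F z'') (\<zeta> - z') = - inner (F z'' - F z') (\<zeta> - z')"
    by (simp add: inner_diff_left)
  ultimately show False using A by linarith
qed

lemma Sa:
  assumes "cmod \<zeta> = 1" "v \<in> Sset F \<zeta>" "t \<ge> 0"
  shows "v + of_real t * \<zeta> \<in> Sset F \<zeta>"
  unfolding Sset_def
proof
  show "\<forall>z\<in>ball 0 1. 0 \<le> inner (v + of_real t * \<zeta> - F z) (\<zeta> - z)"
  proof
    fix z :: complex assume z: "z \<in> ball 0 1"
    have "inner \<zeta> z \<le> cmod \<zeta> * cmod z" by (rule norm_cauchy_schwarz)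
    then have "inner \<zeta> z < 1" using z assms(1) by simp
    moreover have "inner \<zeta> \<zeta> = 1" using assms(1) power2_norm_eq_inner[of \<zeta>] by simp
    ultimately have p: "inner \<zeta> (\<zeta> - z) \<ge> 0" by (simp add: inner_diff_right)
    have "inner (v + of_real t * \<zeta> - F z) (\<zeta> - z) = inner (v - F z) (\<zeta> - z) + t * inner \<zeta> (\<zeta> - z)"
    proof -
      have "of_real t * \<zeta> = t *\<^sub>R \<zeta>" by (simp add: scaleR_conv_of_real)
      then show ?thesis by (simp add: inner_add_left inner_diff_left inner_diff_right right_diff_distrib)
    qed
    moreover have "inner (v - F z) (\<zeta> - z) \<ge> 0" using assms(2) z unfolding Sset_def by blast
    ultimately show "0 \<le> inner (v + of_real t * \<zeta> - F z) (\<zeta> - z)"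
      using p assms(3) by simp
  qed
qed

lemma Sc:
  assumes "cmod \<zeta>1 = 1" "cmod \<zeta>2 = 1" "\<zeta>1 \<noteq> \<zeta>2" "x \<in> Sset F \<zeta>1" "x \<in> Sset F \<zeta>2"
  shows False
proof -
  define z0 where "z0 = (1/2) *\<^sub>R (\<zeta>1 + \<zeta>2)"
  have n12: "(Re \<zeta>1)\<^sup>2 + (Im \<zeta>1)\<^sup>2 = 1" "(Re \<zeta>2)\<^sup>2 + (Im \<zeta>2)\<^sup>2 = 1"
    using assms(1,2) by (simp_all add: cmod_def)
  moreover have "Re \<zeta>1 \<noteq> Re \<zeta>2 \<or> Im \<zeta>1 \<noteq> Im \<zeta>2" using assms(3) complex_eqI by blast
  moreover have idt: "(Re \<zeta>1 + Re \<zeta>2)\<^sup>2 + (Im \<zeta>1 + Im \<zeta>2)\<^sup>2 = 2 * ((Re \<zeta>1)\<^sup>2 + (Im \<zeta>1)\<^sup>2) + 2 * ((Re \<zeta>2)\<^sup>2 + (Im \<zeta>2)\<^sup>2) - ((Re \<zeta>1 - Re \<zeta>2)\<^sup>2 + (Im \<zeta>1 - Im \<zeta>2)\<^sup>2)"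
    by (simp add: power2_eq_square algebra_simps)
  moreover have "(Re \<zeta>1 - Re \<zeta>2)\<^sup>2 + (Im \<zeta>1 - Im \<zeta>2)\<^sup>2 > 0"
    using \<open>Re \<zeta>1 \<noteq> Re \<zeta>2 \<or> Im \<zeta>1 \<noteq> Im \<zeta>2\<close> by (auto simp: sum_power2_gt_zero_iff)
  ultimately have "(Re \<zeta>1 + Re \<zeta>2)\<^sup>2 + (Im \<zeta>1 + Im \<zeta>2)\<^sup>2 < 4" unfolding idt n12 by linarith
  then have "(Re z0)\<^sup>2 + (Im z0)\<^sup>2 < 1" unfolding z0_def by (simp add: power2_eq_square field_simps)
  then have z0U: "z0 \<in> ball 0 1" by (simp add: cmod_def)
  have "\<forall>z\<in>ball 0 1. inner (x - F z) (z0 - z) \<ge> 0"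
  proof
    fix z :: complex assume z: "z \<in> ball 0 1"
    have eqz: "z0 - z = (1/2) *\<^sub>R ((\<zeta>1 - z) + (\<zeta>2 - z))" unfolding z0_def by (simp add: scaleR_conv_of_real field_simps)
    have "inner (x - F z) (z0 - z) = (1/2) * (inner (x - F z) (\<zeta>1 - z) + inner (x - F z) (\<zeta>2 - z))"
      by (simp only: eqz inner_scaleR_right inner_add_right)
    moreover have "inner (x - F z) (\<zeta>1 - z) \<ge> 0" "inner (x - F z) (\<zeta>2 - z) \<ge> 0"
      using assms(4,5) z unfolding Sset_def by blast+
    ultimately show "inner (x - F z) (z0 - z) \<ge> 0" by simp
  qed
  then have "x = F z0" using L z0U by blast
  then show False using Sb[OF assms(1) assms(4) z0U] by simp
qed

lemma VI:
  assumes r: "0 < r" "r < 1"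
  shows "\<exists>y\<in>cball 0 r. \<forall>z\<in>cball 0 r. inner (F z - w) (z - y) \<ge> 0"
proof -
  define K where "K = cball (0::complex) r"
  have KU: "K \<subseteq> ball 0 1" unfolding K_def using r by auto
  define f where "f = (\<lambda>y. closest_point K (y - (F y - w)))"
  have cK: "continuous_on K F" using contF KU continuous_on_subset by blast
  have Kc: "convex K" "closed K" "K \<noteq> {}" unfolding K_def using r by auto
  have "continuous_on K f" unfolding f_def
    by (rule continuous_on_compose2[OF continuous_on_closest_point[OF Kc, of UNIV]])
       (auto intro!: continuous_intros cK)
  moreover have "f \<in> K \<rightarrow> K" unfolding f_def K_def using r
    by (auto intro!: closest_point_in_set)
  ultimately obtain y where y: "y \<in> K" "f y = y"
    using brouwer[of K f] r unfolding K_def by auto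
  have vi: "inner (w - F y) (x - y) \<le> 0" if x: "x \<in> K" for x
  proof -
    have "inner ((y - (F y - w)) - closest_point K (y - (F y - w))) (x - closest_point K (y - (F y - w))) \<le> 0"
      by (rule closest_point_dot) (use x in \<open>auto simp: K_def\<close>)
    then show ?thesis using y(2) unfolding f_def by simp
  qed
  show ?thesis
  proof (intro bexI ballI)
    fix z :: complex assume z: "z \<in> cball 0 r"
    have "inner (F z - w) (z - y) = inner (F z - F y) (z - y) - inner (w - F y) (z - y)"
      by (simp add: inner_diff_left)
    moreover have "inner (F z - F y) (z - y) \<ge> 0"
      using mono_weak z y(1) KU unfolding K_def by blast
    moreover have "inner (w - F y) (z - y) \<le> 0" using vi z unfolding K_def by blast
    ultimately show "inner (F z - w) (z - y) \<ge> 0" by simp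
  qed (use y in \<open>simp add: K_def\<close>)
qed

lemma cover:
  assumes w: "w \<notin> F ` ball 0 1"
  shows "\<exists>\<zeta>. cmod \<zeta> = 1 \<and> w \<in> Sset F \<zeta>"
proof -
  define r where "r = (\<lambda>n::nat. 1 - 1 / (real n + 2))"
  have r: "0 < r n" "r n < 1" for n unfolding r_def by (auto simp: field_simps)
  have "\<forall>n. \<exists>y. y \<in> cball 0 (r n) \<and> (\<forall>z\<in>cball 0 (r n). inner (F z - w) (z - y) \<ge> 0)"
    using VI[OF r] by blast
  then obtain Y where Y: "\<And>n. Y n \<in> cball 0 (r n)" "\<And>n z. z \<in> cball 0 (r n) \<Longrightarrow> inner (F z - w) (z - Y n) \<ge> 0"
    by metis
  have "\<forall>n. Y n \<in> cball 0 1" using Y(1) r by (meson less_imp_le mem_cball_0 order.trans)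
  then obtain \<zeta> \<sigma> where z: "\<zeta> \<in> cball 0 1" "strict_mono \<sigma>" "(Y \<circ> \<sigma>) \<longlonglongrightarrow> \<zeta>"
    using seq_compactE[OF compact_imp_seq_compact[OF compact_cball]] by metis
  have main: "\<forall>z\<in>ball 0 1. inner (w - F z) (\<zeta> - z) \<ge> 0"
  proof
    fix z :: complex assume zU: "z \<in> ball 0 1"
    then have nz: "cmod z < 1" by simp
    obtain N :: nat where N: "1 / (1 - cmod z) < real N" using reals_Archimedean2 by blast
    have rN: "cmod z \<le> r n" if "N \<le> n" for n
    proof -
      have "1 / (1 - cmod z) < real n + 2" using N that by linarith
      then have "1 < (real n + 2) * (1 - cmod z)" using nz by (simp add: field_simps)
      then show ?thesis unfolding r_def using nz by (simp add: field_simps)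
    qed
    have ev: "eventually (\<lambda>n. inner (F z - w) (z - Y (\<sigma> n)) \<ge> 0) sequentially"
      unfolding eventually_sequentially
    proof (intro exI allI impI)
      fix n assume "N \<le> n"
      then have "N \<le> \<sigma> n" using seq_suble[OF z(2), of n] by linarith
      then show "inner (F z - w) (z - Y (\<sigma> n)) \<ge> 0" using Y(2) rN by simp
    qed
    have "(\<lambda>n. inner (F z - w) (z - Y (\<sigma> n))) \<longlonglongrightarrow> inner (F z - w) (z - \<zeta>)"
      using z(3) unfolding o_def by (intro tendsto_intros)
    then have "inner (F z - w) (z - \<zeta>) \<ge> 0" using ev by (rule tendsto_lowerbound) simp
    moreover have "inner (w - F z) (\<zeta> - z) = inner (F z - w) (z - \<zeta>)"
      by (metis inner_minus_left inner_minus_right minus_diff_eq minus_minus)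
    ultimately show "inner (w - F z) (\<zeta> - z) \<ge> 0" by simp
  qed
  have "cmod \<zeta> = 1"
  proof (rule ccontr)
    assume "cmod \<zeta> \<noteq> 1"
    then have zU: "\<zeta> \<in> ball 0 1" using z(1) by simp
    then have "w = F \<zeta>" using L main by blast
    then show False using w zU by blast
  qed
  moreover have "w \<in> Sset F \<zeta>" using main unfolding Sset_def by blast
  ultimately show ?thesis by blast
qed

lemma ctc: "close_to_convex F"
proof -
  define U where "U = ball (0::complex) 1"
  define D where "D = F ` U"
  have inj: "inj_on F U"
    unfolding inj_on_def
  proof (intro ballI impI)
    fix a b assume ab: "a \<in> U" "b \<in> U" "F a = F b"
    show "a = b"
    proof (rule ccontr)
      assume "a \<noteq> b"
      then have "inner (F a - F b) (a - b) > 0" using mono_strict ab unfolding U_def by blast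
      then show False using ab by simp
    qed
  qed
  have openD: "open D" unfolding D_def U_def
    using open_mapping_thm3[OF holF open_ball] inj unfolding U_def by blast
  have connD: "connected D" unfolding D_def U_def
    by (rule connected_continuous_image[OF contF connected_ball])
  obtain g where "homeomorphism U D F g"
    using invariance_of_domain_homeomorphism[of U F] contF inj unfolding U_def D_def by auto
  then have "U homeomorphic D" unfolding homeomorphic_def by blast
  moreover have "simply_connected U" unfolding U_def by (rule convex_imp_simply_connected) simp
  ultimately have scD: "simply_connected D" using homeomorphic_simply_connected_eq by blast
  define H where "H = {h. \<exists>\<zeta> v. cmod \<zeta> = 1 \<and> v \<in> Sset F \<zeta> \<and> h = {v + of_real t * \<zeta> | t. t \<ge> 0}}"
  have Hm: "\<exists>\<zeta> v. cmod \<zeta> = 1 \<and> v \<in> Sset F \<zeta> \<and> h = {v + of_real t * \<zeta> | t. t \<ge> 0}" if "h \<in> H" for h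
    using that unfolding H_def by simp
  have hl: "\<forall>h\<in>H. half_line h"
  proof
    fix h assume "h \<in> H"
    then obtain \<zeta> v where "cmod \<zeta> = 1" "h = {v + of_real t * \<zeta> | t. t \<ge> 0}" using Hm by blast
    then show "half_line h" unfolding half_line_def by (intro exI[of _ v] exI[of _ \<zeta>]) auto
  qed
  have cov: "- D = \<Union>H"
  proof
    show "- D \<subseteq> \<Union>H"
    proof
      fix w assume "w \<in> - D"
      then have "w \<notin> F ` ball 0 1" unfolding D_def U_def by simp
      then obtain \<zeta> where z: "cmod \<zeta> = 1" "w \<in> Sset F \<zeta>" using cover by blast
      have "w \<in> {w + of_real t * \<zeta> | t. t \<ge> 0}" by (rule CollectI, rule exI[of _ 0]) simp
      moreover have "{w + of_real t * \<zeta> | t. t \<ge> 0} \<in> H" unfolding H_def using z by blast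
      ultimately show "w \<in> \<Union>H" by blast
    qed
  next
    show "\<Union>H \<subseteq> - D"
    proof
      fix x assume "x \<in> \<Union>H"
      then obtain h where "h \<in> H" "x \<in> h" by blast
      then obtain \<zeta> v where "cmod \<zeta> = 1" "v \<in> Sset F \<zeta>" "h = {v + of_real t * \<zeta> | t. t \<ge> 0}" using Hm by blast
      then obtain t where z: "cmod \<zeta> = 1" "v \<in> Sset F \<zeta>" "t \<ge> 0" "x = v + of_real t * \<zeta>"
        using \<open>x \<in> h\<close> by blast
      then have "x \<in> Sset F \<zeta>" using Sa by blast
      then show "x \<in> - D" using Sb[OF z(1)] unfolding D_def U_def by blast
    qed
  qed
  have nc: "non_crossing h1 h2" if h1: "h1 \<in> H" and h2: "h2 \<in> H" for h1 h2
  proof -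
    obtain \<zeta>1 v1 where a1: "cmod \<zeta>1 = 1" "v1 \<in> Sset F \<zeta>1" "h1 = {v1 + of_real t * \<zeta>1 | t. t \<ge> 0}"
      using Hm[OF h1] by blast
    obtain \<zeta>2 v2 where a2: "cmod \<zeta>2 = 1" "v2 \<in> Sset F \<zeta>2" "h2 = {v2 + of_real t * \<zeta>2 | t. t \<ge> 0}"
      using Hm[OF h2] by blast
    have "h1 \<subseteq> h2 \<or> h2 \<subseteq> h1 \<or> h1 \<inter> h2 = {}"
    proof (cases "\<zeta>1 = \<zeta>2")
      case False
      have "h1 \<inter> h2 = {}"
      proof (rule ccontr)
        assume "h1 \<inter> h2 \<noteq> {}"
        then obtain x where "x \<in> h1" "x \<in> h2" by blast
        then obtain t1 t2 where tt: "t1 \<ge> 0" "x = v1 + of_real t1 * \<zeta>1" "t2 \<ge> 0" "x = v2 + of_real t2 * \<zeta>2"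
          using a1 a2 by blast
        have "x \<in> Sset F \<zeta>1" unfolding tt(2) using Sa[OF a1(1,2) tt(1)] .
        moreover have "x \<in> Sset F \<zeta>2" unfolding tt(4) using Sa[OF a2(1,2) tt(3)] .
        ultimately have "x \<in> Sset F \<zeta>1" "x \<in> Sset F \<zeta>2" by auto
        then show False using Sc a1 a2 False by blast
      qed
      then show ?thesis by blast
    next
      case True
      show ?thesis
      proof (cases "h1 \<inter> h2 = {}")
        case False
        then obtain x where "x \<in> h1" "x \<in> h2" by blast
        then obtain t1 t2 where t: "t1 \<ge> 0" "x = v1 + of_real t1 * \<zeta>1" "t2 \<ge> 0" "x = v2 + of_real t2 * \<zeta>1"
          using a1 a2 True by blast
        show ?thesis
        proof (cases "t2 \<le> t1")
          case le: True
          have "h2 \<subseteq> h1"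
          proof
            fix y assume "y \<in> h2"
            then obtain s where s: "s \<ge> 0" "y = v2 + of_real s * \<zeta>1" using a2 True by blast
            have "y = v1 + of_real (t1 - t2 + s) * \<zeta>1" using s t by (simp add: algebra_simps)
            moreover have "t1 - t2 + s \<ge> 0" using le s by simp
            ultimately show "y \<in> h1" using a1 by blast
          qed
          then show ?thesis by blast
        next
          case lt: False
          have "h1 \<subseteq> h2"
          proof
            fix y assume "y \<in> h1"
            then obtain s where s: "s \<ge> 0" "y = v1 + of_real s * \<zeta>1" using a1 by blast
            have "y = v2 + of_real (t2 - t1 + s) * \<zeta>1" using s t by (simp add: algebra_simps)
            moreover have "t2 - t1 + s \<ge> 0" using lt s by simp
            ultimately show "y \<in> h2" using a2 True by blast
          qed
          then show ?thesis by blast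
        qed
      qed simp
    qed
    then show ?thesis unfolding non_crossing_def by blast
  qed
  have "close_to_convex_domain D"
    unfolding close_to_convex_domain_def using openD connD scD hl cov nc by blast
  then show ?thesis unfolding close_to_convex_def D_def U_def using inj unfolding U_def by blast
qed

end


theorem lemma4:
  fixes gam del lam :: real and F :: "complex \<Rightarrow> complex"
  assumes "0 \<le> lam" "lam < gam" "gam \<le> del"
    and "class_R gam del lam F"
  shows "(\<forall>z\<in>ball 0 1. Re (deriv F z) > 0) \<and> close_to_convex F"
proof -
  have pos: "\<forall>z\<in>ball 0 1. Re (deriv F z) > 0" using part1[OF assms] .
  have holF: "F holomorphic_on ball 0 1" using assms(4) unfolding class_R_def class_A_def by auto
  have "close_to_convex F" using ctc[OF holF pos] .
  with pos show ?thesis by blast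
qed

end
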